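(* Let $R=\{r_{ab}\}_{N\times N}$ be the transition rate matrix of an irreducible continuous-time Markov jump process on states $\{1,\dots,N\}$: for $a\neq b$, $r_{ab}\ge 0$ is the rate of jumps from $b$ to $a$, and $r_{bb}=-\sum_{a\neq b} r_{ab}$. Let $\boldsymbol{\pi}$ be the unique stationary distribution and $Z=\int_0^\infty\left(e^{Rt}-\boldsymbol{\pi}\boldsymbol{1}^\top\right)\mathrm{d}t$ the fundamental matrix. Fix distinct states $i\neq j$. Regard $R$ (hence $Z$) as a function of the single off-diagonal rate $r_{ij}>0$, with all other off-diagonal rates fixed and $r_{jj}=-\sum_{a\neq j}r_{aj}$ adjusted accordingly. For $m=1,2$, let $a^{(m)}_l$ ($l=1,\dots,N$) and $b^{(m)}_{kl}$ ($k\neq l$, $(k,l)\neq(i,j)$) be real coefficients not depending on $r_{ij}$ (they define the observables $Q_m=\sum_l a^{(m)}_l\tau_l(\tau)+\sum_{k\neq l,(k,l)\neq(i,j)} b^{(m)}_{kl}n_{kl}(\tau)$, which do not count transitions $j\to i$), and set $$c^{(m)}_l=a^{(m)}_l+\sum_{k\neq l,\ (k,l)\neq(i,j)} b^{(m)}_{kl}\,r_{kl}.$$ Define $$\chi_{ij}^{(1)(2)}=\frac{\sum_l c^{(1)}_l (Z_{li}-Z_{lj})}{\sum_l c^{(2)}_l (Z_{li}-Z_{lj})}.$$ Then, at every value of $r_{ij}$ where the denominator is nonzero, $\frac{\mathrm{d}\chi_{ij}^{(1)(2)}}{\mathrm{d}r_{ij}}=0$.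
   Context: $\tau_l(\tau)$ denotes the total time spent in state $l$ up to time $\tau$ and $n_{kl}(\tau)$ the number of jumps from $l$ to $k$ up to time $\tau$. Note that $c^{(m)}_l$ does not depend on $r_{ij}$. $\chi_{ij}^{(1)(2)}$ equals the long-time limit of the ratio of the responses $\frac{\mathrm{d}\langle Q_1(\tau)\rangle}{\mathrm{d}r_{ij}}/\frac{\mathrm{d}\langle Q_2(\tau)\rangle}{\mathrm{d}r_{ij}}$. $\boldsymbol{1}$ is the all-ones column vector. *)

theory Defs
  imports "HOL-Analysis.Analysis"
begin

text \<open>States are the elements of a finite type 'n (playing the role of {1..N}).
  Convention: for a \<noteq> b, the entry R $ a $ b = r_ab is the rate of jumps from b to a;
  diagonal entries make columns sum to zero.\<close>

definition rate_matrix :: "('n::finite \<Rightarrow> 'n \<Rightarrow> real) \<Rightarrow> 'n \<Rightarrow> 'n \<Rightarrow> real \<Rightarrow> real^'n^'n" where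
  "rate_matrix r i j x =
     (\<chi> a b. if a \<noteq> b then (if a = i \<and> b = j then x else r a b)
             else - (\<Sum>c\<in>UNIV - {b}. if c = i \<and> b = j then x else r c b))"

definition irreducible_rates :: "real^'n^'n \<Rightarrow> bool" where
  "irreducible_rates R \<longleftrightarrow>
     (\<forall>a b. (a, b) \<in> {(s, t). s \<noteq> t \<and> R $ t $ s > 0}\<^sup>*)"

fun matpow :: "real^'n^'n \<Rightarrow> nat \<Rightarrow> real^'n^'n" where
  "matpow A 0 = mat 1"
| "matpow A (Suc k) = A ** matpow A k"

definition mexp :: "real \<Rightarrow> real^'n^'n \<Rightarrow> real^'n^'n" where
  "mexp t A = (\<Sum>k. ((t ^ k) / fact k) *\<^sub>R matpow A k)"

definition is_stationary :: "real^'n^'n \<Rightarrow> real^'n \<Rightarrow> bool" where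
  "is_stationary R p \<longleftrightarrow> R *v p = 0 \<and> (\<forall>a. p $ a \<ge> 0) \<and> (\<Sum>a\<in>UNIV. p $ a) = 1"

definition stat_dist :: "real^'n^'n \<Rightarrow> real^'n" where
  "stat_dist R = (THE p. is_stationary R p)"

definition fundamental_matrix :: "real^'n^'n \<Rightarrow> real^'n^'n" where
  "fundamental_matrix R =
     (\<chi> a b. integral {0..} (\<lambda>t. mexp t R $ a $ b - stat_dist R $ a))"

definition coeff_c :: "('n::finite \<Rightarrow> 'n \<Rightarrow> real) \<Rightarrow> 'n \<Rightarrow> 'n \<Rightarrow> ('n \<Rightarrow> real) \<Rightarrow> ('n \<Rightarrow> 'n \<Rightarrow> real) \<Rightarrow> 'n \<Rightarrow> real" where
  "coeff_c r i j a b l = a l + (\<Sum>k\<in>{k. k \<noteq> l \<and> (k, l) \<noteq> (i, j)}. b k l * r k l)"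

definition chi_ratio ::
  "('n::finite \<Rightarrow> 'n \<Rightarrow> real) \<Rightarrow> 'n \<Rightarrow> 'n \<Rightarrow> ('n \<Rightarrow> real) \<Rightarrow> ('n \<Rightarrow> 'n \<Rightarrow> real)
     \<Rightarrow> ('n \<Rightarrow> real) \<Rightarrow> ('n \<Rightarrow> 'n \<Rightarrow> real) \<Rightarrow> real \<Rightarrow> real" where
  "chi_ratio r i j a1 b1 a2 b2 x =
     (let Z = fundamental_matrix (rate_matrix r i j x) in
      (\<Sum>l\<in>UNIV. coeff_c r i j a1 b1 l * (Z $ l $ i - Z $ l $ j)) /
      (\<Sum>l\<in>UNIV. coeff_c r i j a2 b2 l * (Z $ l $ i - Z $ l $ j)))"

end

theory Submission
  imports Defs "HOL-Analysis.Analysis" "HOL-Real_Asymp.Real_Asymp"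
begin

typedef (overloaded) 'n sq = "UNIV :: ((real^'n::finite) \<Rightarrow>\<^sub>L (real^'n)) set"
  morphisms sqop SQ by auto

setup_lifting type_definition_sq

instantiation sq :: (finite) real_normed_vector
begin
lift_definition norm_sq :: "'a sq \<Rightarrow> real" is norm .
lift_definition minus_sq :: "'a sq \<Rightarrow> 'a sq \<Rightarrow> 'a sq" is "(-)" .
lift_definition plus_sq :: "'a sq \<Rightarrow> 'a sq \<Rightarrow> 'a sq" is "(+)" .
lift_definition uminus_sq :: "'a sq \<Rightarrow> 'a sq" is uminus .
lift_definition zero_sq :: "'a sq" is 0 .
lift_definition scaleR_sq :: "real \<Rightarrow> 'a sq \<Rightarrow> 'a sq" is scaleR .
definition dist_sq :: "'a sq \<Rightarrow> 'a sq \<Rightarrow> real" where "dist_sq a b = norm (a - b)"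
definition sgn_sq :: "'a sq \<Rightarrow> 'a sq" where "sgn_sq x = scaleR (inverse (norm x)) x"
definition uniformity_sq_def:
  "(uniformity :: ('a sq \<times> 'a sq) filter) = (INF e\<in>{0 <..}. principal {(x, y). dist x y < e})"
definition open_sq :: "'a sq set \<Rightarrow> bool"
  where "open_sq S = (\<forall>x\<in>S. \<forall>\<^sub>F (x', y) in uniformity. x' = x \<longrightarrow> y \<in> S)"
instance
  apply standard
  unfolding dist_sq_def open_sq_def sgn_sq_def uniformity_sq_def
  apply (rule refl | (transfer, force simp: norm_triangle_ineq algebra_simps))+
  done
end

lemma dist_sqop: "dist (sqop a) (sqop b) = dist a b"
  unfolding dist_sq_def dist_norm by transfer simp

instance sq :: (finite) banach
proof
  fix X :: "nat \<Rightarrow> 'a sq"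
  assume "Cauchy X"
  then have "Cauchy (\<lambda>n. sqop (X n))" unfolding Cauchy_def dist_sqop .
  then obtain L where "(\<lambda>n. sqop (X n)) \<longlonglongrightarrow> L" using convergent_eq_Cauchy by blast
  then have "X \<longlonglongrightarrow> SQ L"
    unfolding lim_sequentially by (metis SQ_inverse UNIV_I dist_sqop)
  then show "convergent X" by (auto simp: convergent_def)
qed

instantiation sq :: (finite) real_normed_algebra_1
begin
lift_definition times_sq :: "'a sq \<Rightarrow> 'a sq \<Rightarrow> 'a sq" is "(o\<^sub>L)" .
lift_definition one_sq :: "'a sq" is id_blinfun .
instance
proof
  show "(0::'a sq) \<noteq> 1"
  proof transfer
    have "id_blinfun (axis undefined 1 :: real^'a) \<noteq> 0" by (simp add: axis_eq_0_iff)
    then show "(0::(real^'a) \<Rightarrow>\<^sub>L _) \<noteq> id_blinfun" by (metis blinfun.zero_left)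
  qed
qed (transfer; auto intro!: blinfun_eqI simp: blinfun.bilinear_simps norm_blinfun_compose)+
end


definition app :: "'n::finite sq \<Rightarrow> real^'n \<Rightarrow> real^'n" where
  "app F v = blinfun_apply (sqop F) v"

lemma app_mult: "app (F * G) v = app F (app G v)"
  unfolding app_def by transfer simp

lemma app_one: "app 1 v = v"
  unfolding app_def by transfer simp

lemma bl_sqop: "bounded_linear (sqop :: 'n::finite sq \<Rightarrow> _)"
  by (rule bounded_linear_intro[where K=1]; transfer; simp)

lemma bl_app: "bounded_linear (\<lambda>F. app F v)"
  unfolding app_def
  by (rule bounded_linear_compose[OF blinfun.bounded_linear_left bl_sqop])

lemma app_linear_v: "bounded_linear (app F)"
  unfolding app_def by (rule blinfun.bounded_linear_right)

definition toS :: "real^'n^'n \<Rightarrow> 'n::finite sq" where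
  "toS A = SQ (Blinfun (\<lambda>v. A *v v))"

lemma app_toS: "app (toS A) v = A *v v"
  unfolding app_def toS_def
  by (simp add: SQ_inverse bounded_linear_Blinfun_apply)

definition ent :: "'n::finite sq \<Rightarrow> 'n \<Rightarrow> 'n \<Rightarrow> real" where
  "ent F a b = app F (axis b 1) $ a"

lemma bl_ent: "bounded_linear (\<lambda>F. ent F a b)"
  unfolding ent_def
  by (rule bounded_linear_compose[OF bounded_linear_vec_nth bl_app])

lemma mv_axis: "((A::real^'n::finite^'n) *v axis b 1) $ a = A $ a $ b"
  by (simp add: matrix_vector_mult_def axis_def if_distrib cong: if_cong)

lemma app_component: "app F v $ a = (\<Sum>b\<in>UNIV. ent F a b * v $ b)"
proof -
  have lin: "linear (app F)" by (rule bounded_linear.linear[OF app_linear_v])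
  have "v = (\<Sum>b\<in>UNIV. (v $ b) *\<^sub>R axis b 1)"
    using basis_expansion[of v] by (simp add: scalar_mult_eq_scaleR)
  then have "app F v = app F (\<Sum>b\<in>UNIV. (v $ b) *\<^sub>R axis b 1)" by simp
  also have "\<dots> = (\<Sum>b\<in>UNIV. app F ((v $ b) *\<^sub>R axis b 1))"
    by (rule linear_sum[OF lin])
  also have "\<dots> = (\<Sum>b\<in>UNIV. (v $ b) *\<^sub>R app F (axis b 1))"
    by (simp only: linear_scale[OF lin])
  finally have "app F v $ a = (\<Sum>b\<in>UNIV. (v $ b) *\<^sub>R app F (axis b 1)) $ a" by simp
  also have "\<dots> = (\<Sum>b\<in>UNIV. ent F a b * v $ b)"
    by (simp only: sum_component vector_scaleR_component ent_def real_scaleR_def mult.commute)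
  finally show ?thesis .
qed

lemma ent_mult: "ent (F * G) a b = (\<Sum>c\<in>UNIV. ent F a c * ent G c b)"
proof -
  have "ent (F*G) a b = app F (app G (axis b 1)) $ a" by (simp only: ent_def app_mult)
  also have "\<dots> = (\<Sum>c\<in>UNIV. ent F a c * app G (axis b 1) $ c)" by (rule app_component)
  also have "\<dots> = (\<Sum>c\<in>UNIV. ent F a c * ent G c b)" by (simp only: ent_def)
  finally show ?thesis .
qed

lemma ent_one: "ent 1 a b = (if a = b then 1 else 0)"
  by (simp add: ent_def app_one axis_def)

lemma ent_toS: "ent (toS A) a b = A $ a $ b"
  by (simp add: ent_def app_toS mv_axis)

lemma app_toS_pow: "app (toS A ^ k) v = matpow A k *v v"
proof (induction k arbitrary: v)
  case 0
  then show ?case by (simp add: app_one)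
next
  case (Suc k)
  have "app (toS A ^ Suc k) v = A *v (matpow A k *v v)"
    by (simp only: power_Suc app_mult app_toS Suc.IH)
  also have "\<dots> = matpow A (Suc k) *v v"
    by (simp only: matpow.simps matrix_vector_mul_assoc)
  finally show ?case .
qed

lemma ent_toS_pow: "ent (toS A ^ k) a b = matpow A k $ a $ b"
  by (simp add: ent_def app_toS_pow mv_axis)

lemma mexp_ent: "mexp t A = (\<chi> a b. ent (exp (t *\<^sub>R toS A)) a b)"
proof -
  let ?S = "toS A"
  have s: "(\<lambda>k. (t *\<^sub>R ?S) ^ k /\<^sub>R fact k) sums exp (t *\<^sub>R ?S)"
    by (rule exp_converges)
  have "(\<lambda>k. ((t ^ k) / fact k) *\<^sub>R matpow A k) sums (\<chi> a b. ent (exp (t *\<^sub>R toS A)) a b)"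
    unfolding sums_def
  proof (rule vec_tendstoI, rule vec_tendstoI)
    fix a b
    have lim: "(\<lambda>n. ent (\<Sum>k<n. (t *\<^sub>R ?S) ^ k /\<^sub>R fact k) a b) \<longlonglongrightarrow> ent (exp (t *\<^sub>R ?S)) a b"
      using bounded_linear.tendsto[OF bl_ent s[unfolded sums_def]] .
    have eq: "ent (\<Sum>k<n. (t *\<^sub>R ?S) ^ k /\<^sub>R fact k) a b = (\<Sum>k<n. ((t ^ k) / fact k) *\<^sub>R matpow A k) $ a $ b" for n
    proof -
      have "ent (\<Sum>k<n. (t *\<^sub>R ?S) ^ k /\<^sub>R fact k) a b = (\<Sum>k<n. ent ((t *\<^sub>R ?S) ^ k /\<^sub>R fact k) a b)"
        by (rule linear_sum[OF bounded_linear.linear[OF bl_ent]])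
      also have "\<dots> = (\<Sum>k<n. ((t ^ k) / fact k) * matpow A k $ a $ b)"
      proof (rule sum.cong[OF refl])
        fix k
        have "(t *\<^sub>R ?S) ^ k /\<^sub>R fact k = ((t ^ k) / fact k) *\<^sub>R (?S ^ k)"
          by (simp only: scaleR_power scaleR_scaleR divide_inverse_commute)
        then show "ent ((t *\<^sub>R ?S) ^ k /\<^sub>R fact k) a b = ((t ^ k) / fact k) * matpow A k $ a $ b"
          using linear_scale[OF bounded_linear.linear[OF bl_ent], of "(t ^ k) / fact k" "?S ^ k" a b]
          by (simp only: ent_toS_pow real_scaleR_def)
      qed
      also have "\<dots> = (\<Sum>k<n. ((t ^ k) / fact k) *\<^sub>R matpow A k) $ a $ b"
        by (simp only: sum_component vector_scaleR_component real_scaleR_def)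
      finally show ?thesis .
    qed
    show "((\<lambda>n. (\<Sum>k<n. ((t ^ k) / fact k) *\<^sub>R matpow A k) $ a $ b) \<longlongrightarrow> (\<chi> a b. ent (exp (t *\<^sub>R toS A)) a b) $ a $ b) sequentially"
      unfolding vec_lambda_beta eq[symmetric] by (rule lim)
  qed
  then show ?thesis unfolding mexp_def by (rule sums_unique[symmetric])
qed


lemma sq_eqI: "(\<And>v. app F v = app G v) \<Longrightarrow> F = G"
  unfolding app_def by transfer (auto intro: blinfun_eqI)

lemma app_scaleR: "app (c *\<^sub>R F) v = c *\<^sub>R app F v"
  unfolding app_def by transfer (simp add: blinfun.scaleR_left)

lemma app_add: "app (F + G) v = app F v + app G v"
  unfolding app_def by transfer (simp add: blinfun.add_left)

lemma app_zero_v: "app F 0 = 0"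
  by (rule linear_0[OF bounded_linear.linear[OF app_linear_v]])

lemma app_diff_v: "app F (v - w) = app F v - app F w"
  by (rule linear_diff[OF bounded_linear.linear[OF app_linear_v]])

lemma app_scale_v: "app F (c *\<^sub>R v) = c *\<^sub>R app F v"
  by (rule linear_scale[OF bounded_linear.linear[OF app_linear_v]])

lemma ent_scaleR: "ent (c *\<^sub>R F) a b = c * ent F a b"
  by (simp add: ent_def app_scaleR)

lemma exp_fun:
  assumes bl: "bounded_linear \<phi>" and z: "\<And>m. \<phi> (X ^ Suc m) = 0"
  shows "\<phi> (exp (t *\<^sub>R X)) = \<phi> 1"
proof -
  have s: "(\<lambda>k. (t *\<^sub>R X) ^ k /\<^sub>R fact k) sums exp (t *\<^sub>R X)"
    by (rule exp_converges)
  have "(\<lambda>k. \<phi> ((t *\<^sub>R X) ^ k /\<^sub>R fact k)) sums \<phi> (exp (t *\<^sub>R X))"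
    by (rule bounded_linear.sums[OF bl s])
  moreover have "(\<lambda>k. \<phi> ((t *\<^sub>R X) ^ k /\<^sub>R fact k)) = (\<lambda>k. if k = 0 then \<phi> 1 else 0)"
  proof
    fix k
    have "\<phi> ((t *\<^sub>R X) ^ k /\<^sub>R fact k) = ((t ^ k) / fact k) *\<^sub>R \<phi> (X ^ k)"
      by (simp only: scaleR_power scaleR_scaleR divide_inverse_commute
          linear_scale[OF bounded_linear.linear[OF bl]])
    then show "\<phi> ((t *\<^sub>R X) ^ k /\<^sub>R fact k) = (if k = 0 then \<phi> 1 else 0)"
      using z[unfolded power_Suc] by (cases k) simp_all
  qed
  ultimately have "(\<lambda>k. if k = 0 then \<phi> 1 else 0) sums \<phi> (exp (t *\<^sub>R X))" by simp
  moreover have "(\<lambda>k. if k = 0 then \<phi> 1 else 0) sums \<phi> 1"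
    using sums_single[of 0 "\<lambda>_. \<phi> 1"] by simp
  ultimately show ?thesis using sums_unique2 by blast
qed

definition n1 :: "real^'n::finite \<Rightarrow> real" where "n1 v = (\<Sum>a\<in>UNIV. \<bar>v $ a\<bar>)"
definition vs :: "real^'n::finite \<Rightarrow> real" where "vs v = (\<Sum>a\<in>UNIV. v $ a)"

lemma n1_nonneg: "n1 v \<ge> 0" unfolding n1_def by (simp add: sum_nonneg)

lemma comp_le_n1: "\<bar>v $ a\<bar> \<le> n1 v"
  unfolding n1_def by (rule member_le_sum) auto

lemma n1_diff: "n1 (v - w) \<le> n1 v + n1 w"
  unfolding n1_def by (simp add: sum.distrib[symmetric] sum_mono abs_triangle_ineq4)

lemma n1_eq_0: "n1 v = 0 \<Longrightarrow> v = 0"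
  unfolding n1_def by (simp add: sum_nonneg_eq_0_iff vec_eq_iff)

lemma vs_diff: "vs (v - w) = vs v - vs w"
  unfolding vs_def by (simp add: sum_subtractf)

lemma vs_scale: "vs (c *\<^sub>R v) = c * vs v"
  unfolding vs_def by (simp add: sum_distrib_left)

lemma stoch_sum:
  assumes "\<And>b. (\<Sum>a\<in>UNIV. ent F a b) = 1"
  shows "vs (app F v) = vs v"
proof -
  have "vs (app F v) = (\<Sum>a\<in>UNIV. \<Sum>b\<in>UNIV. ent F a b * v $ b)"
    unfolding vs_def by (simp add: app_component)
  also have "\<dots> = (\<Sum>b\<in>UNIV. (\<Sum>a\<in>UNIV. ent F a b) * v $ b)"
    by (subst sum.swap) (simp add: sum_distrib_right)
  also have "\<dots> = vs v" using assms by (simp add: vs_def)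
  finally show ?thesis .
qed

lemma stoch_nonneg:
  assumes "\<And>a b. ent F a b \<ge> 0" "\<And>b. v $ b \<ge> 0"
  shows "app F v $ a \<ge> 0"
  unfolding app_component using assms by (simp add: sum_nonneg)

lemma stoch_contract:
  assumes lb: "\<And>a b. ent F a b \<ge> \<delta>"
    and cs: "\<And>b. (\<Sum>a\<in>UNIV. ent F a b) = 1"
    and v0: "vs v = 0"
  shows "n1 (app F v) \<le> (1 - real CARD('n::finite) * \<delta>) * n1 (v::real^'n)"
proof -
  have "app F v $ a = (\<Sum>b\<in>UNIV. (ent F a b - \<delta>) * v $ b)" for a
  proof -
    have "(\<Sum>b\<in>UNIV. (ent F a b - \<delta>) * v $ b) = (\<Sum>b\<in>UNIV. ent F a b * v $ b) - \<delta> * vs v"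
      by (simp add: vs_def left_diff_distrib sum_subtractf sum_distrib_left)
    then show ?thesis using v0 by (simp add: app_component)
  qed
  then have "\<bar>app F v $ a\<bar> \<le> (\<Sum>b\<in>UNIV. (ent F a b - \<delta>) * \<bar>v $ b\<bar>)" for a
    using lb by (auto intro!: order_trans[OF sum_abs] sum_mono simp: abs_mult)
  then have "n1 (app F v) \<le> (\<Sum>a\<in>UNIV. \<Sum>b\<in>UNIV. (ent F a b - \<delta>) * \<bar>v $ b\<bar>)"
    unfolding n1_def by (rule sum_mono)
  also have "\<dots> = (\<Sum>b\<in>UNIV. (\<Sum>a\<in>UNIV. (ent F a b - \<delta>)) * \<bar>v $ b\<bar>)"
    by (subst sum.swap) (simp add: sum_distrib_right)
  also have "\<dots> = (\<Sum>b\<in>UNIV. (1 - real CARD('n) * \<delta>) * \<bar>v $ b\<bar>)"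
    using cs by (simp add: sum_subtractf)
  also have "\<dots> = (1 - real CARD('n) * \<delta>) * n1 v"
    by (simp add: n1_def sum_distrib_left)
  finally show ?thesis .
qed

lemma app_pow_fix: "app F v = v \<Longrightarrow> app (F ^ n) v = v"
  by (induction n) (simp_all add: app_one app_mult)

lemma stoch_contract_pow:
  assumes lb: "\<And>a b. ent F a b \<ge> \<delta>"
    and cs: "\<And>b. (\<Sum>a\<in>UNIV. ent F a b) = 1"
    and v0: "vs v = 0"
    and rho: "0 \<le> 1 - real CARD('n::finite) * \<delta>"
  shows "n1 (app (F ^ n) v) \<le> (1 - real CARD('n) * \<delta>) ^ n * n1 (v::real^'n)"
proof (induction n)
  case 0
  then show ?case by (simp add: app_one)
next
  case (Suc n)
  have vsn: "vs (app (F ^ n) v) = 0"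
    by (induction n) (simp_all add: app_one app_mult stoch_sum[OF cs] v0)
  have "n1 (app (F ^ Suc n) v) = n1 (app F (app (F ^ n) v))" by (simp add: app_mult)
  also have "\<dots> \<le> (1 - real CARD('n) * \<delta>) * n1 (app (F ^ n) v)"
    by (rule stoch_contract[OF lb cs vsn])
  also have "\<dots> \<le> (1 - real CARD('n) * \<delta>) * ((1 - real CARD('n) * \<delta>) ^ n * n1 v)"
    by (rule mult_left_mono[OF Suc.IH rho])
  finally show ?case by simp
qed

lemma ftc_inf:
  fixes f h g :: "real \<Rightarrow> real"
  assumes fi: "f integrable_on {0..}" and gi: "g integrable_on {0..}"
    and le: "\<And>t. t \<ge> 0 \<Longrightarrow> \<bar>f t\<bar> \<le> g t"
    and d: "\<And>t. (h has_real_derivative f t) (at t)"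
    and lim: "(h \<longlongrightarrow> L) at_top"
  shows "integral {0..} f = L - h 0"
proof -
  define fk where "fk = (\<lambda>k::nat. \<lambda>x. if x \<in> {0..real k} then f x else 0)"
  have hi: "(fk k has_integral (integral {0..real k} f)) {0..}" for k
    unfolding fk_def
    by (metis (no_types, lifting) ext Icc_subset_Ici_iff order.refl has_integral_restrict
        integrable_integral integrable_on_subinterval[OF fi])
  have ftc: "integral {0..real k} f = h (real k) - h 0" for k
  proof -
    have "(f has_integral (h (real k) - h 0)) {0..real k}"
      by (rule fundamental_theorem_of_calculus)
         (auto intro: has_field_derivative_at_within[OF d] simp flip: has_real_derivative_iff_has_vector_derivative)
    then show ?thesis by (rule integral_unique)
  qed
  have dc: "(\<lambda>k. integral {0..} (fk k)) \<longlonglongrightarrow> integral {0..} f"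
  proof (rule dominated_convergence(2)[where h=g])
    show "fk k integrable_on {0..}" for k using hi by blast
    show "g integrable_on {0..}" by (rule gi)
    show "norm (fk k x) \<le> g x" if "x \<in> {0..}" for k x
      using le[of x] that by (auto simp: fk_def)
    show "(\<lambda>k. fk k x) \<longlonglongrightarrow> f x" if "x \<in> {0..}" for x
    proof -
      have ev: "eventually (\<lambda>k. real k \<ge> x) sequentially"
        by (meson eventually_sequentiallyI nat_ceiling_le_eq)
      have "eventually (\<lambda>k. fk k x = f x) sequentially"
        using ev by (rule eventually_mono) (use that in \<open>auto simp: fk_def\<close>)
      then show ?thesis by (simp add: tendsto_eventually)
    qed
  qed
  have "integral {0..} (fk k) = h (real k) - h 0" for k
    using hi[of k] ftc[of k] by (simp add: integral_unique)
  moreover have "(\<lambda>k. h (real k) - h 0) \<longlonglongrightarrow> L - h 0"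
    by (intro tendsto_diff tendsto_const filterlim_compose[OF lim filterlim_real_sequentially])
  ultimately show ?thesis using dc LIMSEQ_unique by auto
qed


lemma ent_exp_sums:
  "(\<lambda>k. (t ^ k / fact k) * matpow A k $ a $ b) sums ent (exp (t *\<^sub>R toS A)) a b"
proof -
  have "(\<lambda>k. ent ((t *\<^sub>R toS A) ^ k /\<^sub>R fact k) a b) sums ent (exp (t *\<^sub>R toS A)) a b"
    by (rule bounded_linear.sums[OF bl_ent exp_converges])
  moreover have "ent ((t *\<^sub>R toS A) ^ k /\<^sub>R fact k) a b = (t ^ k / fact k) * matpow A k $ a $ b" for k
  proof -
    have "(t *\<^sub>R toS A) ^ k /\<^sub>R fact k = ((t ^ k) / fact k) *\<^sub>R (toS A ^ k)"
      by (simp only: scaleR_power scaleR_scaleR divide_inverse_commute)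
    then show ?thesis by (simp only: ent_scaleR ent_toS_pow)
  qed
  ultimately show ?thesis by simp
qed

lemma matpow_nonneg:
  assumes "\<And>a b. (A::real^'n::finite^'n) $ a $ b \<ge> 0"
  shows "matpow A k $ a $ b \<ge> 0"
  using assms
  by (induction k arbitrary: a b) (auto simp: mat_def matrix_matrix_mult_def intro!: sum_nonneg)

locale gen =
  fixes R :: "real^'n::finite^'n"
  assumes offdiag: "\<And>a b. a \<noteq> b \<Longrightarrow> R$a$b \<ge> 0"
    and colsum: "\<And>b. (\<Sum>a\<in>UNIV. R$a$b) = 0"
    and irr: "irreducible_rates R"
begin

definition S where "S = toS R"
definition E where "E t = exp (t *\<^sub>R S)"

lemma ent_S: "ent S a b = R $ a $ b"
  by (simp add: S_def ent_toS)

lemma app_S: "app S v = R *v v"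
  by (simp add: S_def app_toS)

lemma E_add: "E (s + t) = E s * E t"
  unfolding E_def scaleR_add_left
  by (rule exp_add_commuting) simp

lemma E_0: "E 0 = 1" by (simp add: E_def)

lemma E_nat: "E (real n) = E 1 ^ n"
proof (induction n)
  case 0 then show ?case by (simp add: E_0)
next
  case (Suc n)
  have "E (real (Suc n)) = E (1 + real n)" by simp
  also have "\<dots> = E 1 * E (real n)" by (rule E_add)
  finally show ?case using Suc by simp
qed

lemma ent_E_deriv:
  "((\<lambda>t. ent (E t) a b) has_real_derivative (\<Sum>c\<in>UNIV. R$a$c * ent (E t) c b)) (at t)"
proof -
  have d: "((\<lambda>t. E t) has_vector_derivative S * E t) (at t)"
    unfolding E_def by (rule exp_scaleR_has_vector_derivative_left)
  have "((\<lambda>t. ent (E t) a b) has_derivative (\<lambda>x. ent (x *\<^sub>R (S * E t)) a b)) (at t)"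
    using bounded_linear.has_derivative[OF bl_ent d[unfolded has_vector_derivative_def]] .
  then have "((\<lambda>t. ent (E t) a b) has_derivative (\<lambda>x. x *\<^sub>R ent (S * E t) a b)) (at t)"
    by (simp add: ent_scaleR)
  then have "((\<lambda>t. ent (E t) a b) has_real_derivative ent (S * E t) a b) (at t)"
    by (simp add: has_real_derivative_iff_has_vector_derivative has_vector_derivative_def)
  then show ?thesis by (simp add: ent_mult ent_S)
qed

lemma cont_ent_E: "continuous_on A (\<lambda>t. ent (E t) a b)"
  by (intro continuous_at_imp_continuous_on ballI DERIV_isCont[OF ent_E_deriv])

lemma E_fix: assumes "R *v v = 0" shows "app (E t) v = v"
proof -
  have "(\<lambda>F. app F v) (exp (t *\<^sub>R S)) = (\<lambda>F. app F v) 1"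
  proof (rule exp_fun[OF bl_app])
    fix m
    show "app (S ^ Suc m) v = 0"
      by (simp only: power_Suc2 app_mult app_S assms app_zero_v)
  qed
  then show ?thesis by (simp add: E_def app_one)
qed

lemma E_colsum: "(\<Sum>a\<in>UNIV. ent (E t) a b) = 1"
proof -
  have bl: "bounded_linear (\<lambda>F. \<Sum>a\<in>UNIV. ent F a b)"
    by (rule bounded_linear_sum) (rule bl_ent)
  have "(\<lambda>F. \<Sum>a\<in>UNIV. ent F a b) (exp (t *\<^sub>R S)) = (\<lambda>F. \<Sum>a\<in>UNIV. ent F a b) 1"
  proof (rule exp_fun[OF bl])
    fix m
    have "(\<Sum>a\<in>UNIV. ent (S ^ Suc m) a b) = (\<Sum>a\<in>UNIV. \<Sum>c\<in>UNIV. R$a$c * ent (S ^ m) c b)"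
      by (simp only: power_Suc ent_mult ent_S)
    also have "\<dots> = (\<Sum>c\<in>UNIV. (\<Sum>a\<in>UNIV. R$a$c) * ent (S ^ m) c b)"
      by (subst sum.swap) (simp add: sum_distrib_right)
    also have "\<dots> = 0" by (simp add: colsum)
    finally show "(\<Sum>a\<in>UNIV. ent (S ^ Suc m) a b) = 0" .
  qed
  then show ?thesis by (simp add: E_def ent_one)
qed

definition cc where "cc = (\<Sum>b\<in>UNIV. \<bar>R$b$b\<bar>)"
definition M where "M = (\<chi> a b. R$a$b + (if a = b then cc else 0))"

lemma M_nonneg: "M $ a $ b \<ge> 0"
proof (cases "a = b")
  case True
  have "\<bar>R$b$b\<bar> \<le> cc" unfolding cc_def by (rule member_le_sum[where i=b and f="\<lambda>b. \<bar>R$b$b\<bar>"]) auto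
  then show ?thesis using True by (simp add: M_def)
next
  case False
  then show ?thesis by (simp add: M_def offdiag)
qed

lemma toS_M: "toS M = S + cc *\<^sub>R 1"
proof (rule sq_eqI)
  fix v
  have d: "(if i = j then cc else 0) * v $ j = (if j = i then cc * v $ i else 0)" for i j :: 'n
    by auto
  have "M *v v = R *v v + cc *\<^sub>R v"
    by (simp add: vec_eq_iff matrix_vector_mult_def M_def distrib_right sum.distrib d)
  then show "app (toS M) v = app (S + cc *\<^sub>R 1) v"
    by (simp add: app_toS app_add app_scaleR app_one app_S)
qed

lemma E_shift: "E t = exp (- (cc * t)) *\<^sub>R exp (t *\<^sub>R toS M)"
proof -
  have "t *\<^sub>R S = t *\<^sub>R toS M + of_real (- (cc * t))"
    by (simp add: toS_M scaleR_add_right of_real_def)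
  then have "E t = exp (t *\<^sub>R toS M + of_real (- (cc * t)))" by (simp add: E_def)
  also have "\<dots> = exp (t *\<^sub>R toS M) * exp (of_real (- (cc * t)))"
    by (rule exp_add_commuting) (simp add: of_real_def)
  also have "\<dots> = exp (- (cc * t)) *\<^sub>R exp (t *\<^sub>R toS M)"
    by (simp only: exp_of_real) (simp add: of_real_def)
  finally show ?thesis .
qed

lemma ent_expM_ge:
  assumes "t \<ge> 0"
  shows "ent (exp (t *\<^sub>R toS M)) a b \<ge> (t ^ k / fact k) * matpow M k $ a $ b"
proof -
  let ?f = "\<lambda>k. (t ^ k / fact k) * matpow M k $ a $ b"
  have s: "?f sums ent (exp (t *\<^sub>R toS M)) a b" by (rule ent_exp_sums)
  have "sum ?f {k} \<le> suminf ?f"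
    by (rule sum_le_suminf) (use s assms in \<open>auto simp: sums_iff intro!: divide_nonneg_nonneg mult_nonneg_nonneg zero_le_power matpow_nonneg M_nonneg\<close>)
  then show ?thesis using s by (simp add: sums_iff)
qed

lemma ent_E_nonneg: assumes "t \<ge> 0" shows "ent (E t) a b \<ge> 0"
proof -
  have "0 \<le> ent (exp (t *\<^sub>R toS M)) a b"
    using ent_expM_ge[where t=t and a=a and b=b and k=0] assms
    by (cases "a = b") (auto simp: mat_def)
  then show ?thesis by (simp add: E_shift ent_scaleR)
qed

lemma path_pos: "(a, b) \<in> {(s, t). s \<noteq> t \<and> R $ t $ s > 0}\<^sup>* \<Longrightarrow> \<exists>k. matpow M k $ b $ a > 0"
proof (induction rule: rtrancl_induct)
  case base
  show ?case by (rule exI[of _ 0]) (simp add: mat_def)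
next
  case (step y z)
  then obtain k where k: "matpow M k $ y $ a > 0" by blast
  from step have yz: "y \<noteq> z" "R $ z $ y > 0" by auto
  have "M $ z $ y * matpow M k $ y $ a \<le> (\<Sum>d\<in>UNIV. M $ z $ d * matpow M k $ d $ a)"
    by (rule member_le_sum[where i=y and f="\<lambda>d. M $ z $ d * matpow M k $ d $ a"])
       (auto intro!: mult_nonneg_nonneg M_nonneg matpow_nonneg)
  moreover have "M $ z $ y * matpow M k $ y $ a > 0"
    using yz k by (simp add: M_def)
  ultimately have "matpow M (Suc k) $ z $ a > 0"
    by (simp add: matrix_matrix_mult_def)
  then show ?case by blast
qed

lemma P_pos: "ent (E 1) a b > 0"
proof -
  obtain k where k: "matpow M k $ a $ b > 0"
    using path_pos irr unfolding irreducible_rates_def by blast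
  have "ent (exp (1 *\<^sub>R toS M)) a b \<ge> (1 ^ k / fact k) * matpow M k $ a $ b"
    by (rule ent_expM_ge) simp
  moreover have "(1 ^ k / fact k) * matpow M k $ a $ b > 0" using k by simp
  ultimately show ?thesis by (simp add: E_shift ent_scaleR)
qed

end


context gen
begin

lemma vs_R: "vs (R *v y) = 0"
proof -
  have "vs (R *v y) = (\<Sum>a\<in>UNIV. \<Sum>c\<in>UNIV. R$a$c * y$c)"
    by (simp add: vs_def matrix_vector_mult_def)
  also have "\<dots> = (\<Sum>c\<in>UNIV. (\<Sum>a\<in>UNIV. R$a$c) * y$c)"
    by (subst sum.swap) (simp add: sum_distrib_right)
  finally show ?thesis by (simp add: colsum)
qed

definition \<delta> where "\<delta> = Min ((\<lambda>(a,b). ent (E 1) a b) ` UNIV)"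
definition \<rho> where "\<rho> = 1 - real CARD('n) * \<delta>"

lemma \<delta>_le: "\<delta> \<le> ent (E 1) a b"
  unfolding \<delta>_def by (rule Min_le) (auto intro: image_eqI[where x="(a,b)"])

lemma \<delta>_pos: "\<delta> > 0"
  unfolding \<delta>_def by (subst Min_gr_iff) (auto simp: P_pos)

lemma \<rho>_nonneg: "0 \<le> \<rho>"
proof -
  obtain b :: 'n where True by blast
  have "(\<Sum>a\<in>(UNIV::'n set). \<delta>) \<le> (\<Sum>a\<in>UNIV. ent (E 1) a b)"
    by (rule sum_mono) (rule \<delta>_le)
  then show ?thesis by (simp add: \<rho>_def E_colsum)
qed

lemma \<rho>_lt1: "\<rho> < 1"
proof -
  have "real CARD('n) > 0" by simp
  then show ?thesis using \<delta>_pos by (simp add: \<rho>_def)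
qed

lemma contractP: "vs v = 0 \<Longrightarrow> n1 (app (E 1) v) \<le> \<rho> * n1 v"
  unfolding \<rho>_def by (rule stoch_contract[OF \<delta>_le E_colsum])

lemma contractPn: "vs v = 0 \<Longrightarrow> n1 (app (E 1 ^ n) v) \<le> \<rho> ^ n * n1 v"
  unfolding \<rho>_def by (rule stoch_contract_pow[OF \<delta>_le E_colsum _ \<rho>_nonneg[unfolded \<rho>_def]])

lemma ker_unique: assumes "R *v w = 0" "vs w = 0" shows "w = 0"
proof -
  have "n1 w = n1 (app (E 1) w)" using E_fix[OF assms(1)] by simp
  also have "\<dots> \<le> \<rho> * n1 w" by (rule contractP[OF assms(2)])
  finally have "(1 - \<rho>) * n1 w \<le> 0" by (simp add: algebra_simps)
  then have "n1 w = 0" using \<rho>_lt1 n1_nonneg[of w]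
    by (simp add: mult_le_0_iff)
  then show ?thesis by (rule n1_eq_0)
qed

lemma ker_exists: "\<exists>w. R *v w = 0 \<and> w \<noteq> 0"
proof (rule ccontr)
  assume "\<not> ?thesis"
  then have "\<forall>x. R *v x = 0 \<longrightarrow> x = 0" by blast
  then obtain B where "B ** R = mat 1" using matrix_left_invertible_ker by blast
  then have RB: "R ** B = mat 1" using matrix_left_right_inverse by blast
  obtain k :: 'n where True by blast
  have "R *v (B *v axis k 1) = axis k 1"
    by (simp add: matrix_vector_mul_assoc RB)
  then have "vs (axis k (1::real)) = 0" using vs_R by metis
  moreover have "vs (axis k (1::real)) = 1"
    by (simp add: vs_def axis_def)
  ultimately show False by simp
qed

lemma Pn_nonneg: "(\<And>b. v $ b \<ge> 0) \<Longrightarrow> app (E 1 ^ n) v $ a \<ge> 0"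
proof (induction n arbitrary: a)
  case 0 then show ?case by (simp add: app_one)
next
  case (Suc n)
  show ?case
    by (simp only: power_Suc app_mult)
       (rule stoch_nonneg[OF ent_E_nonneg], simp, rule Suc.IH, rule Suc.prems)
qed

lemma stat_exists: "\<exists>p. is_stationary R p"
proof -
  obtain w where w: "R *v w = 0" "w \<noteq> 0" using ker_exists by blast
  have vw: "vs w \<noteq> 0" using ker_unique w by blast
  define p where "p = (1 / vs w) *\<^sub>R w"
  have Rp: "R *v p = 0" by (simp add: p_def matrix_vector_mult_scaleR w)
  have vp: "vs p = 1" using vw by (simp add: p_def vs_scale)
  have pnn: "p $ a \<ge> 0" for a
  proof -
    define q :: "real^'n" where "q = axis a 1"
    have vq: "vs q = 1" by (simp add: q_def vs_def axis_def)
    have le: "- (\<rho> ^ n * n1 (p - q)) \<le> p $ a" for n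
    proof -
      have "p = app (E 1 ^ n) p" using app_pow_fix[OF E_fix[OF Rp]] by simp
      also have "\<dots> = app (E 1 ^ n) q + app (E 1 ^ n) (p - q)" by (simp add: app_diff_v)
      finally have "p $ a = app (E 1 ^ n) q $ a + app (E 1 ^ n) (p - q) $ a" by (metis vector_add_component)
      moreover have "app (E 1 ^ n) q $ a \<ge> 0" by (rule Pn_nonneg) (simp add: q_def axis_def)
      moreover have "\<bar>app (E 1 ^ n) (p - q) $ a\<bar> \<le> \<rho> ^ n * n1 (p - q)"
      proof -
        have vsd: "vs (p - q) = 0" by (simp add: vs_diff vp vq)
        show ?thesis using order_trans[OF comp_le_n1 contractPn[OF vsd]] .
      qed
      ultimately show ?thesis by linarith
    qed
    have "(\<lambda>n. - (\<rho> ^ n * n1 (p - q))) \<longlonglongrightarrow> - (0 * n1 (p - q))"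
      by (intro tendsto_minus tendsto_mult_right LIMSEQ_power_zero) (use \<rho>_nonneg \<rho>_lt1 in auto)
    then show ?thesis using le by (intro LIMSEQ_le_const2) auto
  qed
  have "is_stationary R p"
    unfolding is_stationary_def using Rp pnn vp by (simp add: vs_def)
  then show ?thesis ..
qed

lemma stat_unique: "is_stationary R p \<Longrightarrow> is_stationary R q \<Longrightarrow> p = q"
proof -
  assume p: "is_stationary R p" and q: "is_stationary R q"
  have "R *v (p - q) = 0" using p q
    by (simp add: is_stationary_def matrix_vector_mult_diff_distrib)
  moreover have "vs (p - q) = 0" using p q by (simp add: is_stationary_def vs_def sum_subtractf)
  ultimately have "p - q = 0" by (rule ker_unique)
  then show "p = q" by simp
qed

definition \<pi> where "\<pi> = stat_dist R"

lemma pi_stat: "is_stationary R \<pi>"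
  unfolding \<pi>_def stat_dist_def
  using stat_exists stat_unique by (metis theI)

lemma R_pi: "R *v \<pi> = 0" and pi_nonneg: "\<pi> $ a \<ge> 0" and vs_pi: "vs \<pi> = 1"
  using pi_stat by (auto simp: is_stationary_def vs_def)

lemma n1_pi: "n1 \<pi> = 1"
  using vs_pi pi_nonneg by (simp add: n1_def vs_def)

end


context gen
begin

lemma decay:
  assumes t: "t \<ge> 0"
  shows "\<bar>ent (E t) a b - \<pi> $ a\<bar> \<le> 2 * \<rho> ^ nat \<lfloor>t\<rfloor>"
proof -
  define n where "n = nat \<lfloor>t\<rfloor>"
  define s where "s = t - real n"
  have s0: "s \<ge> 0" using t by (simp add: s_def n_def)
  have "E t = E (real n + s)" by (simp add: s_def)
  also have "\<dots> = E 1 ^ n * E s" by (simp only: E_add E_nat)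
  finally have Et: "E t = E 1 ^ n * E s" .
  define w where "w = app (E s) (axis b 1) - \<pi>"
  have fx: "app (E 1 ^ n) \<pi> = \<pi>" by (rule app_pow_fix[OF E_fix[OF R_pi]])
  have "ent (E t) a b - \<pi> $ a = app (E 1 ^ n) w $ a"
    by (simp add: ent_def Et app_mult w_def app_diff_v fx)
  also have "\<bar>\<dots>\<bar> \<le> n1 (app (E 1 ^ n) w)" by (rule comp_le_n1)
  also have "\<dots> \<le> \<rho> ^ n * n1 w"
  proof (rule contractPn)
    have "vs (app (E s) (axis b 1)) = 1"
      using E_colsum[of s b] by (simp add: vs_def ent_def)
    then show "vs w = 0" by (simp add: w_def vs_diff vs_pi)
  qed
  also have "\<dots> \<le> \<rho> ^ n * 2"
  proof (rule mult_left_mono)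
    have "n1 (app (E s) (axis b 1)) = 1"
      using E_colsum[of s b] ent_E_nonneg[OF s0] by (simp add: n1_def ent_def)
    then show "n1 w \<le> 2" using n1_diff[of "app (E s) (axis b 1)" \<pi>] n1_pi by (simp add: w_def)
    show "0 \<le> \<rho> ^ n" using \<rho>_nonneg by simp
  qed
  finally show ?thesis by (simp add: n_def mult.commute)
qed

lemma expbound: "\<exists>K lam. K \<ge> 0 \<and> lam > 0 \<and> (\<forall>t\<ge>0. \<forall>a b. \<bar>ent (E t) a b - \<pi> $ a\<bar> \<le> K * exp (- lam * t))"
proof -
  define \<sigma> where "\<sigma> = max \<rho> (1/2)"
  have \<sigma>0: "\<sigma> > 0" and \<sigma>1: "\<sigma> < 1" using \<rho>_lt1 by (auto simp: \<sigma>_def)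
  define lam where "lam = - ln \<sigma>"
  have lam0: "lam > 0" using \<sigma>0 \<sigma>1 by (simp add: lam_def)
  have "\<bar>ent (E t) a b - \<pi> $ a\<bar> \<le> (2 * exp lam) * exp (- lam * t)" if t: "t \<ge> 0" for t a b
  proof -
    define n where "n = nat \<lfloor>t\<rfloor>"
    have nt: "real n \<ge> t - 1" using t by (simp add: n_def)
    have "\<rho> ^ n \<le> \<sigma> ^ n" using \<rho>_nonneg by (intro power_mono) (auto simp: \<sigma>_def)
    also have "\<sigma> ^ n = exp (real n * ln \<sigma>)"
      using \<sigma>0 by (simp add: exp_of_nat_mult)
    also have "\<dots> \<le> exp ((t - 1) * ln \<sigma>)"
      using nt \<sigma>0 \<sigma>1 by (intro exp_mono mult_right_mono_neg) auto
    also have "(t - 1) * ln \<sigma> = lam + (- lam * t)" by (simp add: lam_def algebra_simps)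
    finally have "\<rho> ^ n \<le> exp (lam + (- lam * t))" .
    then have "\<rho> ^ n \<le> exp lam * exp (- lam * t)" by (simp only: exp_add)
    then show ?thesis using decay[OF t, of a b] by (simp add: n_def)
  qed
  then show ?thesis using lam0 by (intro exI[of _ "2 * exp lam"] exI[of _ lam]) auto
qed

lemma g_int: "(\<lambda>t. ent (E t) a b - \<pi> $ a) integrable_on {0..}"
proof -
  obtain K lam where K: "K \<ge> 0" "lam > 0"
    and bd: "\<And>t a b. t \<ge> 0 \<Longrightarrow> \<bar>ent (E t) a b - \<pi> $ a\<bar> \<le> K * exp (- lam * t)"
    using expbound by blast
  show ?thesis
  proof (rule measurable_bounded_by_integrable_imp_integrable)
    show "(\<lambda>t. ent (E t) a b - \<pi> $ a) \<in> borel_measurable (lebesgue_on {0..})"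
      by (intro continuous_imp_measurable_on_sets_lebesgue continuous_on_diff cont_ent_E continuous_on_const) simp
    show "(\<lambda>t. K * exp (- lam * t)) integrable_on {0..}"
      by (intro integrable_on_mult_right integrable_on_exp_minus_to_infinity K)
    show "norm (ent (E t) a b - \<pi> $ a) \<le> K * exp (- lam * t)" if "t \<in> {0..}" for t
      using bd[of t a b] that by simp
  qed simp
qed

definition Z where "Z = fundamental_matrix R"

lemma Z_ent: "Z $ a $ b = integral {0..} (\<lambda>t. ent (E t) a b - \<pi> $ a)"
  by (simp add: Z_def fundamental_matrix_def mexp_ent E_def S_def \<pi>_def)

lemma Z_colsum: "(\<Sum>a\<in>UNIV. Z $ a $ b) = 0"
proof -
  have "(\<Sum>a\<in>UNIV. Z $ a $ b) = integral {0..} (\<lambda>t. \<Sum>a\<in>UNIV. ent (E t) a b - \<pi> $ a)"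
    unfolding Z_ent by (rule integral_sum[symmetric]) (auto intro: g_int)
  also have "(\<lambda>t. \<Sum>a\<in>UNIV. ent (E t) a b - \<pi> $ a) = (\<lambda>t. 0)"
    using vs_pi by (simp add: sum_subtractf E_colsum vs_def)
  finally show ?thesis by simp
qed

lemma RZ: "(\<Sum>c\<in>UNIV. R $ a $ c * Z $ c $ b) = \<pi> $ a - (if a = b then 1 else 0)"
proof -
  obtain K lam where K: "K \<ge> 0" "lam > 0"
    and bd: "\<And>t a b. t \<ge> 0 \<Longrightarrow> \<bar>ent (E t) a b - \<pi> $ a\<bar> \<le> K * exp (- lam * t)"
    using expbound by blast
  define f where "f = (\<lambda>t. \<Sum>c\<in>UNIV. R $ a $ c * (ent (E t) c b - \<pi> $ c))"
  have "(\<Sum>c\<in>UNIV. R $ a $ c * Z $ c $ b) = (\<Sum>c\<in>UNIV. integral {0..} (\<lambda>t. R $ a $ c * (ent (E t) c b - \<pi> $ c)))"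
    unfolding Z_ent by (intro sum.cong refl integral_mult g_int)
  also have "\<dots> = integral {0..} f"
    unfolding f_def by (rule integral_sum[symmetric]) (auto intro: integrable_on_mult_right g_int)
  also have "\<dots> = \<pi> $ a - ent (E 0) a b"
  proof (rule ftc_inf[where g = "\<lambda>t. (\<Sum>c\<in>UNIV. \<bar>R $ a $ c\<bar>) * K * exp (- lam * t)"])
    show "f integrable_on {0..}"
      unfolding f_def by (auto intro!: integrable_sum integrable_on_mult_right g_int)
    show "(\<lambda>t. (\<Sum>c\<in>UNIV. \<bar>R $ a $ c\<bar>) * K * exp (- lam * t)) integrable_on {0..}"
      by (intro integrable_on_mult_right integrable_on_exp_minus_to_infinity K)
    show "\<bar>f t\<bar> \<le> (\<Sum>c\<in>UNIV. \<bar>R $ a $ c\<bar>) * K * exp (- lam * t)" if "t \<ge> 0" for t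
    proof -
      have "\<bar>f t\<bar> \<le> (\<Sum>c\<in>UNIV. \<bar>R $ a $ c * (ent (E t) c b - \<pi> $ c)\<bar>)"
        unfolding f_def by (rule sum_abs)
      also have "\<dots> \<le> (\<Sum>c\<in>UNIV. \<bar>R $ a $ c\<bar> * (K * exp (- lam * t)))"
        by (intro sum_mono) (unfold abs_mult, intro mult_left_mono bd that abs_ge_zero)
      finally show ?thesis by (simp add: sum_distrib_right mult.assoc)
    qed
    have Rpi: "(\<Sum>c\<in>UNIV. R $ a $ c * \<pi> $ c) = 0"
      using R_pi by (simp add: vec_eq_iff matrix_vector_mult_def)
    show "((\<lambda>t. ent (E t) a b) has_real_derivative f t) (at t)" for t
    proof -
      have "f t = (\<Sum>c\<in>UNIV. R $ a $ c * ent (E t) c b)"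
        unfolding f_def using Rpi by (simp add: right_diff_distrib sum_subtractf)
      then show ?thesis using ent_E_deriv by simp
    qed
    show "((\<lambda>t. ent (E t) a b) \<longlongrightarrow> \<pi> $ a) at_top"
    proof (rule LIM_zero_cancel, rule Lim_null_comparison)
      show "\<forall>\<^sub>F t in at_top. norm (ent (E t) a b - \<pi> $ a) \<le> K * exp (- lam * t)"
        using eventually_ge_at_top[of "0::real"] by eventually_elim (unfold real_norm_def, rule bd)
      show "((\<lambda>t. K * exp (- lam * t)) \<longlongrightarrow> 0) at_top" using K by real_asymp
    qed
  qed
  finally show ?thesis by (simp add: E_0 ent_one)
qed

end


lemma gen_RZ: "gen R \<Longrightarrow> (\<Sum>c\<in>UNIV. R $ a $ c * fundamental_matrix R $ c $ b) = stat_dist R $ a - (if a = b then 1 else 0)"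
proof -
  assume "gen R"
  interpret gen R by fact
  show ?thesis using RZ by (simp add: Z_def \<pi>_def)
qed

lemma gen_Zcol: "gen R \<Longrightarrow> (\<Sum>a\<in>UNIV. fundamental_matrix R $ a $ b) = 0"
proof -
  assume "gen R"
  interpret gen R by fact
  show ?thesis using Z_colsum by (simp add: Z_def)
qed

lemma gen_ker: "gen R \<Longrightarrow> R *v w = 0 \<Longrightarrow> vs w = 0 \<Longrightarrow> w = 0"
proof -
  assume "gen R"
  interpret gen R by fact
  show "R *v w = 0 \<Longrightarrow> vs w = 0 \<Longrightarrow> w = 0" by (rule ker_unique)
qed

lemma rm_gen:
  assumes "\<And>a b. a \<noteq> b \<Longrightarrow> r a b \<ge> 0" "x > 0" "irreducible_rates (rate_matrix r i j x)"
  shows "gen (rate_matrix r i j x)"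
proof
  show "irreducible_rates (rate_matrix r i j x)" by fact
  show "a \<noteq> b \<Longrightarrow> 0 \<le> rate_matrix r i j x $ a $ b" for a b
    using assms by (simp add: rate_matrix_def)
  show "(\<Sum>a\<in>UNIV. rate_matrix r i j x $ a $ b) = 0" for b
  proof -
    have "(\<Sum>a\<in>UNIV. rate_matrix r i j x $ a $ b) = rate_matrix r i j x $ b $ b + (\<Sum>a\<in>UNIV - {b}. rate_matrix r i j x $ a $ b)"
      by (simp add: sum.remove)
    also have "(\<Sum>a\<in>UNIV - {b}. rate_matrix r i j x $ a $ b) = (\<Sum>c\<in>UNIV - {b}. if c = i \<and> b = j then x else r c b)"
      by (rule sum.cong) (auto simp: rate_matrix_def)
    finally show ?thesis by (simp add: rate_matrix_def)
  qed
qed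

lemma rm_diff:
  assumes ij: "i \<noteq> j"
  shows "rate_matrix r i j y $ a $ c = rate_matrix r i j x $ a $ c
           + (if c = j then (y - x) * ((if a = i then 1 else 0) - (if a = j then 1 else 0)) else 0)"
proof (cases "a = c")
  case False
  then show ?thesis using ij by (auto simp: rate_matrix_def)
next
  case True
  have split: "(if c' = i \<and> c = j then y else r c' c) = (if c' = i \<and> c = j then x else r c' c) + (if c' = i \<and> c = j then y - x else 0)" for c'
    by auto
  have "(\<Sum>c'\<in>UNIV - {c}. if c' = i \<and> c = j then y - x else 0) = (if c = j then y - x else 0)"
  proof (cases "c = j")
    case True
    then have "(\<Sum>c'\<in>UNIV - {c}. if c' = i \<and> c = j then y - x else 0) = (\<Sum>c'\<in>UNIV - {j}. if c' = i then y - x else 0)"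
      by simp
    also have "\<dots> = y - x" using ij by (simp add: sum.delta')
    finally show ?thesis using True by simp
  qed simp
  then show ?thesis using True ij
    by (auto simp: rate_matrix_def split sum.distrib)
qed

lemma chi_const:
  fixes r :: "'n::finite \<Rightarrow> 'n \<Rightarrow> real"
  assumes ij: "i \<noteq> j"
    and nn: "\<And>a b. a \<noteq> b \<Longrightarrow> r a b \<ge> 0"
    and irr: "\<And>x. x > 0 \<Longrightarrow> irreducible_rates (rate_matrix r i j x)"
    and x: "x > 0" and y: "y > 0"
  shows "\<exists>\<kappa>. \<kappa> \<noteq> 0 \<and> (\<forall>l. fundamental_matrix (rate_matrix r i j x) $ l $ i - fundamental_matrix (rate_matrix r i j x) $ l $ j
          = \<kappa> * (fundamental_matrix (rate_matrix r i j y) $ l $ i - fundamental_matrix (rate_matrix r i j y) $ l $ j))"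
proof -
  let ?Rx = "rate_matrix r i j x" and ?Ry = "rate_matrix r i j y"
  have gx: "gen ?Rx" by (rule rm_gen[OF nn x irr[OF x]])
  have gy: "gen ?Ry" by (rule rm_gen[OF nn y irr[OF y]])
  define dx where "dx = (\<chi> l. fundamental_matrix ?Rx $ l $ i - fundamental_matrix ?Rx $ l $ j)"
  define dy where "dy = (\<chi> l. fundamental_matrix ?Ry $ l $ i - fundamental_matrix ?Ry $ l $ j)"
  define u :: "'n \<Rightarrow> real" where "u = (\<lambda>a. (if a = i then 1 else 0) - (if a = j then 1 else 0))"
  have Rd: "(\<Sum>c\<in>UNIV. R $ a $ c * (fundamental_matrix R $ c $ i - fundamental_matrix R $ c $ j)) = - u a"
    if "gen R" for R a
    using gen_RZ[OF that, of a i] gen_RZ[OF that, of a j]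
    by (simp add: right_diff_distrib sum_subtractf u_def)
  have vsd: "vs (\<chi> l. fundamental_matrix R $ l $ i - fundamental_matrix R $ l $ j) = 0" if "gen R" for R
    using gen_Zcol[OF that, of i] gen_Zcol[OF that, of j] by (simp add: vs_def sum_subtractf)
  define \<kappa> where "\<kappa> = 1 - (y - x) * dx $ j"
  have Ry_dx: "(?Ry *v dx) $ a = - \<kappa> * u a" for a
  proof -
    have "(?Ry *v dx) $ a = (\<Sum>c\<in>UNIV. ?Rx $ a $ c * dx $ c) + (y - x) * u a * dx $ j"
      by (simp add: matrix_vector_mult_def rm_diff[OF ij, of r y a _ x] distrib_right sum.distrib
           if_distrib[of "\<lambda>z. z * _"] u_def cong: if_cong)
    also have "(\<Sum>c\<in>UNIV. ?Rx $ a $ c * dx $ c) = - u a" using Rd[OF gx] by (simp add: dx_def)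
    finally show ?thesis by (simp add: \<kappa>_def algebra_simps)
  qed
  have Ry_dy: "(?Ry *v dy) $ a = - u a" for a
    using Rd[OF gy] by (simp add: dy_def matrix_vector_mult_def)
  have "?Ry *v (dx - \<kappa> *\<^sub>R dy) = 0"
    by (simp add: vec_eq_iff matrix_vector_mult_diff_distrib matrix_vector_mult_scaleR Ry_dx Ry_dy)
  moreover have "vs (dx - \<kappa> *\<^sub>R dy) = 0"
    using vsd[OF gx] vsd[OF gy] by (simp add: vs_diff vs_scale dx_def dy_def)
  ultimately have "dx - \<kappa> *\<^sub>R dy = 0" by (rule gen_ker[OF gy])
  then have eq: "dx = \<kappa> *\<^sub>R dy" by simp
  have "\<kappa> \<noteq> 0"
  proof
    assume "\<kappa> = 0"
    then have "dx = 0" using eq by simp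
    then have "(\<Sum>c\<in>UNIV. ?Rx $ i $ c * dx $ c) = 0" by simp
    moreover have "(\<Sum>c\<in>UNIV. ?Rx $ i $ c * dx $ c) = - u i" using Rd[OF gx] by (simp add: dx_def)
    ultimately show False using ij by (simp add: u_def)
  qed
  moreover have "\<forall>l. dx $ l = \<kappa> * dy $ l" using eq by simp
  ultimately show ?thesis unfolding dx_def dy_def by auto
qed


theorem theorem2:
  fixes r :: "'n::finite \<Rightarrow> 'n \<Rightarrow> real"
    and i j :: 'n
    and a1 a2 :: "'n \<Rightarrow> real" and b1 b2 :: "'n \<Rightarrow> 'n \<Rightarrow> real"
    and x0 :: real
  assumes "i \<noteq> j"
    and "\<And>a b. a \<noteq> b \<Longrightarrow> r a b \<ge> 0"
    and "\<And>x. x > 0 \<Longrightarrow> irreducible_rates (rate_matrix r i j x)"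
    and "x0 > 0"
    and "(\<Sum>l\<in>UNIV. coeff_c r i j a2 b2 l *
            (fundamental_matrix (rate_matrix r i j x0) $ l $ i
             - fundamental_matrix (rate_matrix r i j x0) $ l $ j)) \<noteq> 0"
  shows "(chi_ratio r i j a1 b1 a2 b2 has_real_derivative 0) (at x0)"
proof -
  let ?d = "\<lambda>x l. fundamental_matrix (rate_matrix r i j x) $ l $ i - fundamental_matrix (rate_matrix r i j x) $ l $ j"
  let ?N = "\<lambda>x. \<Sum>l\<in>UNIV. coeff_c r i j a1 b1 l * ?d x l"
  let ?D = "\<lambda>x. \<Sum>l\<in>UNIV. coeff_c r i j a2 b2 l * ?d x l"
  have const: "chi_ratio r i j a1 b1 a2 b2 y = ?N x0 / ?D x0" if y: "y > 0" for y
  proof -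
    obtain \<kappa> where k: "\<kappa> \<noteq> 0" "\<And>l. ?d x0 l = \<kappa> * ?d y l"
      using chi_const[OF assms(1,2,3) assms(4) y] by blast
    have N: "?N x0 = \<kappa> * ?N y" by (simp add: k(2) sum_distrib_left mult_ac)
    have D: "?D x0 = \<kappa> * ?D y" by (simp add: k(2) sum_distrib_left mult_ac)
    have "chi_ratio r i j a1 b1 a2 b2 y = ?N y / ?D y"
      by (simp add: chi_ratio_def Let_def)
    also have "\<dots> = ?N x0 / ?D x0" using k(1) by (simp add: N D)
    finally show ?thesis .
  qed
  have "((\<lambda>y. ?N x0 / ?D x0) has_real_derivative 0) (at x0)" by simp
  then show ?thesis
    by (rule has_field_derivative_transform_within_open[where S="{0<..}"]) (use assms(4) const in auto)
qed

end
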